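(* There is an absolute constant $C$ such that the following holds. In the negative-fill variable-processor cup game on $n$ cups against a greedy emptier, let $k,m$ be positive integers with $4k\mid m$ and $m\le n$, and suppose that currently at least $m$ cups have fill exactly $0$. Then the filler can ensure that after at most $Ck^3$ rounds at least $m/4$ cups have fill exactly $k/2$.
   Context: Negative-fill variable-processor cup game: real fills; each round the filler chooses an integer $1\le p\le n$ and reals $a_i\in[0,1]$ with $\sum a_i=p$ and adds $a_i$ to cup $i$; then the emptier chooses $p$ distinct cups and subtracts exactly $1$ from each (fills may become negative). The greedy emptier subtracts from the $p$ fullest cups after the filler's move. *)

theory Defs
  imports Main "HOL.Real"
begin

text \<open>Cups are indexed by 0..<n; a state is a fill function nat => real (values
  at indices >= n are irrelevant).\<close>

definition valid_fill :: "nat \<Rightarrow> nat \<Rightarrow> (nat \<Rightarrow> real) \<Rightarrow> bool" where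
  "valid_fill n p a \<longleftrightarrow> 1 \<le> p \<and> p \<le> n \<and> (\<forall>i<n. 0 \<le> a i \<and> a i \<le> 1)
     \<and> (\<Sum>i<n. a i) = real p"

definition greedy_choice :: "nat \<Rightarrow> nat \<Rightarrow> (nat \<Rightarrow> real) \<Rightarrow> nat set \<Rightarrow> bool" where
  "greedy_choice n p g E \<longleftrightarrow> E \<subseteq> {..<n} \<and> card E = p
     \<and> (\<forall>i\<in>E. \<forall>j\<in>{..<n} - E. g j \<le> g i)"

fun filler_wins :: "nat \<Rightarrow> ((nat \<Rightarrow> real) \<Rightarrow> bool) \<Rightarrow> nat \<Rightarrow> (nat \<Rightarrow> real) \<Rightarrow> bool" where
  "filler_wins n G 0 f = G f"
| "filler_wins n G (Suc t) f =
     (G f \<or> (\<exists>p a. valid_fill n p a \<and>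
        (\<forall>E. greedy_choice n p (\<lambda>i. f i + a i) E \<longrightarrow>
             filler_wins n G t (\<lambda>i. f i + a i - (if i \<in> E then 1 else 0)))))"

definition count_fill :: "nat \<Rightarrow> (nat \<Rightarrow> real) \<Rightarrow> real \<Rightarrow> nat" where
  "count_fill n f x = card {i. i < n \<and> f i = x}"

end

theory Submission
  imports Defs
begin

lemma fw_G: "G f \<Longrightarrow> filler_wins n G t f"
  by (cases t) auto

lemma fw_Suc: "filler_wins n G t f \<Longrightarrow> filler_wins n G (Suc t) f"
proof (induction t arbitrary: f)
  case 0
  then show ?case by simp
next
  case (Suc t)
  from Suc.prems show ?case
    using Suc.IH by (simp only: filler_wins.simps) blast
qed

lemma fw_mono: "filler_wins n G t f \<Longrightarrow> t \<le> t' \<Longrightarrow> filler_wins n G t' f"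
proof (induction t' )
  case 0 then show ?case by simp
next
  case (Suc t')
  then show ?case using fw_Suc by (cases "t = Suc t'") auto
qed

lemma fire_real:
  fixes f :: "nat \<Rightarrow> real" and x :: real and s :: nat
  assumes s1: "1 \<le> s" and cnt: "2*s \<le> count_fill n f x"
  and H: "\<And>g. (\<And>y. int (count_fill n g y) = int (count_fill n f y) + int s * ((if y = x + 1/2 then 1 else 0) + (if y = x - 1/2 then 1 else 0) - 2*(if y = x then 1 else 0))) \<Longrightarrow> filler_wins n G t g"
  shows "filler_wins n G (Suc t) f"
proof -
  obtain A where A: "A \<subseteq> {i. i < n \<and> f i = x}" "card A = 2*s"
    using cnt unfolding count_fill_def by (meson obtain_subset_with_card_n)
  have An: "A \<subseteq> {..<n}" using A(1) by auto
  have finA: "finite A" using An finite_subset by blast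
  have fA: "\<And>i. i \<in> A \<Longrightarrow> f i = x" using A(1) by auto
  define Hs where "Hs = {i. i < n \<and> i \<notin> A \<and> f i > x - 1/2}"
  have Hn: "Hs \<subseteq> {..<n}" unfolding Hs_def by auto
  have finH: "finite Hs" using Hn finite_subset by blast
  have disj: "A \<inter> Hs = {}" unfolding Hs_def by auto
  define a where "a i = (if i \<in> A then 1/2 else if i \<in> Hs then 1 else (0::real))" for i
  define p where "p = s + card Hs"
  have "card (A \<union> Hs) \<le> card {..<n::nat}"
    by (rule card_mono) (use An Hn in auto)
  hence cardle: "card A + card Hs \<le> n" using card_Un_disjoint[OF finA finH disj] by simp
  have sum_a: "(\<Sum>i<n. a i) = real p"
  proof -
    have "(\<Sum>i<n. a i) = (\<Sum>i\<in>A \<union> Hs. a i)"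
      by (rule sum.mono_neutral_right) (use An Hn in \<open>auto simp: a_def\<close>)
    also have "\<dots> = (\<Sum>i\<in>A. a i) + (\<Sum>i\<in>Hs. a i)"
      by (rule sum.union_disjoint[OF finA finH disj])
    also have "(\<Sum>i\<in>A. a i) = (\<Sum>i\<in>A. 1/2)" by (rule sum.cong) (auto simp: a_def)
    also have "(\<Sum>i\<in>Hs. a i) = (\<Sum>i\<in>Hs. 1)" by (rule sum.cong) (use disj in \<open>auto simp: a_def\<close>)
    finally show ?thesis using A(2) by (simp add: p_def)
  qed
  have valid: "valid_fill n p a"
    unfolding valid_fill_def using s1 cardle A(2) sum_a by (auto simp: p_def a_def)
  show ?thesis
  proof (simp only: filler_wins.simps, rule disjI2, intro exI conjI allI impI)
    show "valid_fill n p a" by (rule valid)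
    fix E assume gr: "greedy_choice n p (\<lambda>i. f i + a i) E"
    have En: "E \<subseteq> {..<n}" and cE: "card E = p"
      and top: "\<And>i j. i \<in> E \<Longrightarrow> j < n \<Longrightarrow> j \<notin> E \<Longrightarrow> f j + a j \<le> f i + a i"
      using gr unfolding greedy_choice_def by auto
    have finE: "finite E" using En finite_subset by blast
    have HE: "Hs \<subseteq> E"
    proof
      fix j assume jH: "j \<in> Hs"
      show "j \<in> E"
      proof (rule ccontr)
        assume jE: "j \<notin> E"
        have jn: "j < n" and hj: "f j + a j > x + 1/2" using jH disj by (auto simp: Hs_def a_def)
        have "E \<subseteq> Hs - {j}"
        proof
          fix i assume iE: "i \<in> E"
          have "f i + a i > x + 1/2" using top[OF iE jn jE] hj by linarith
          moreover have "i < n" using iE En by auto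
          ultimately show "i \<in> Hs - {j}" using fA jE iE
            by (auto simp: a_def Hs_def split: if_splits)
        qed
        hence "card E \<le> card (Hs - {j})" by (intro card_mono) (use finH in auto)
        also have "\<dots> < card Hs" by (rule card_Diff1_less[OF finH jH])
        finally show False using cE s1 by (simp add: p_def)
      qed
    qed
    have EAH: "E \<subseteq> A \<union> Hs"
    proof
      fix i assume iE: "i \<in> E"
      show "i \<in> A \<union> Hs"
      proof (rule ccontr)
        assume ni: "i \<notin> A \<union> Hs"
        have iN: "i < n" using iE En by auto
        have hi: "f i + a i \<le> x - 1/2" using ni iN by (auto simp: a_def Hs_def)
        have "A \<subseteq> E"
        proof
          fix j assume jA: "j \<in> A"
          show "j \<in> E"
          proof (rule ccontr)
            assume "j \<notin> E"
            hence "f j + a j \<le> f i + a i" using top[OF iE] jA An by auto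
            moreover have "f j + a j = x + 1/2" using jA fA by (simp add: a_def)
            ultimately show False using hi by linarith
          qed
        qed
        hence "insert i (A \<union> Hs) \<subseteq> E" using HE iE by auto
        hence "card (insert i (A \<union> Hs)) \<le> card E" by (intro card_mono finE)
        moreover have "card (insert i (A \<union> Hs)) = Suc (card A + card Hs)"
          using ni finA finH card_Un_disjoint[OF finA finH disj] by simp
        ultimately show False using cE A(2) by (simp add: p_def)
      qed
    qed
    have EAs: "card (A \<inter> E) = s"
    proof -
      have "E = (A \<inter> E) \<union> Hs" using EAH HE by auto
      hence "card E = card (A \<inter> E) + card Hs"
        using card_Un_disjoint[of "A \<inter> E" Hs] finA finH disj by auto
      thus ?thesis using cE by (simp add: p_def)
    qed
    have AEs: "card (A - E) = s"
      using card_Diff_subset_Int[of A E] finA A(2) EAs by simp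
    define g where "g = (\<lambda>i. f i + a i - (if i \<in> E then 1 else 0))"
    have "filler_wins n G t g"
    proof (rule H)
      fix y
      define Q where "Q = {i. i < n \<and> i \<notin> A \<and> f i = y}"
      have finQ: "finite Q" unfolding Q_def by auto
      have eqf: "{i. i < n \<and> f i = y} = Q \<union> (if y = x then A else {})"
        using An fA unfolding Q_def by auto
      have gA: "\<And>i. i \<in> A \<Longrightarrow> g i = x + 1/2 - (if i \<in> E then 1 else 0)"
        using fA by (simp add: g_def a_def)
      have gN: "\<And>i. i < n \<Longrightarrow> i \<notin> A \<Longrightarrow> g i = f i"
      proof -
        fix i assume "i < n" "i \<notin> A"
        thus "g i = f i" using HE EAH by (cases "i \<in> Hs") (auto simp: g_def a_def)
      qed
      have eqg: "{i. i < n \<and> g i = y} = Q \<union> ((if y = x - 1/2 then A \<inter> E else {}) \<union> (if y = x + 1/2 then A - E else {}))"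
      proof (rule set_eqI)
        fix i
        show "i \<in> {i. i < n \<and> g i = y} \<longleftrightarrow> i \<in> Q \<union> ((if y = x - 1/2 then A \<inter> E else {}) \<union> (if y = x + 1/2 then A - E else {}))"
          using gA gN An unfolding Q_def by (cases "i \<in> A"; cases "i \<in> E") auto
      qed
      have c1: "count_fill n f y = card Q + (if y = x then 2*s else 0)"
      proof -
        have "Q \<inter> A = {}" by (auto simp: Q_def)
        thus ?thesis unfolding count_fill_def eqf using card_Un_disjoint[OF finQ finA] A(2) by auto
      qed
      have d3: "(if y = x - 1/2 then A \<inter> E else {}) \<inter> (if y = x + 1/2 then A - E else {}) = {}" by auto
      have c2: "count_fill n g y = card Q + ((if y = x - 1/2 then s else 0) + (if y = x + 1/2 then s else 0))"
        unfolding count_fill_def eqg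
        apply (subst card_Un_disjoint)
        using finQ finA apply (auto simp: Q_def)[3]
        apply (subst card_Un_disjoint)
        using finA EAs AEs by auto
      show "int (count_fill n g y) = int (count_fill n f y) + int s * ((if y = x + 1/2 then 1 else 0) + (if y = x - 1/2 then 1 else 0) - 2*(if y = x then 1 else 0))"
        unfolding c1 c2 by auto
    qed
    thus "filler_wins n G t (\<lambda>i. f i + a i - (if i \<in> E then 1 else 0))" unfolding g_def .
  qed
qed

definition dl :: "int \<Rightarrow> int \<Rightarrow> int" where "dl j l = (if l = j then 1 else 0)"

definition lift :: "(int \<Rightarrow> int) \<Rightarrow> real \<Rightarrow> int" where
  "lift c y = (if real_of_int \<lfloor>2*y\<rfloor> = 2*y then c \<lfloor>2*y\<rfloor> else 0)"

lemma lift_dl: "lift (dl j) y = (if y = real_of_int j / 2 then 1 else 0)"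
proof (cases "real_of_int \<lfloor>2*y\<rfloor> = 2*y")
  case True
  have "(\<lfloor>2*y\<rfloor> = j) = (y = real_of_int j / 2)"
  proof
    assume "\<lfloor>2*y\<rfloor> = j" thus "y = real_of_int j / 2" using True by simp
  next
    assume "y = real_of_int j / 2" hence "2*y = real_of_int j" by simp
    thus "\<lfloor>2*y\<rfloor> = j" by simp
  qed
  thus ?thesis using True by (simp add: lift_def dl_def)
next
  case False
  have "y \<noteq> real_of_int j / 2"
  proof
    assume "y = real_of_int j / 2" hence "2*y = real_of_int j" by simp
    thus False using False by simp
  qed
  thus ?thesis using False by (simp add: lift_def)
qed

lemma lift_at: "lift c (real_of_int j / 2) = c j"
  by (simp add: lift_def)

lemma lift_lin: "lift (\<lambda>l. c l + w * (dl a l + dl b l - 2 * dl e l)) y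
   = lift c y + w * (lift (dl a) y + lift (dl b) y - 2 * lift (dl e) y)"
  by (simp add: lift_def)

definition WW :: "nat \<Rightarrow> ((nat \<Rightarrow> real) \<Rightarrow> bool) \<Rightarrow> (real \<Rightarrow> int) \<Rightarrow> nat \<Rightarrow> nat \<Rightarrow> (int \<Rightarrow> int) \<Rightarrow> bool" where
  "WW n G R u t c \<longleftrightarrow> (\<forall>g. (\<forall>y. int (count_fill n g y) = R y + int u * lift c y) \<longrightarrow> filler_wins n G t g)"

lemma WW_mono: "WW n G R u t c \<Longrightarrow> t \<le> t' \<Longrightarrow> WW n G R u t' c"
  unfolding WW_def using fw_mono by blast

lemma fire_abs:
  assumes w1: "1 \<le> w" and cw: "2*w \<le> c j" and Rpos: "\<forall>y. 0 \<le> R y" and u1: "1 \<le> u"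
  and W: "WW n G R u t (\<lambda>l. c l + w * (dl (j+1) l + dl (j-1) l - 2 * dl j l))"
  shows "WW n G R u (Suc t) c"
  unfolding WW_def
proof (intro allI impI)
  fix g assume hg: "\<forall>y. int (count_fill n g y) = R y + int u * lift c y"
  define s where "s = u * nat w"
  have si: "int s = int u * w" using w1 by (simp add: s_def)
  show "filler_wins n G (Suc t) g"
  proof (rule fire_real[where x = "real_of_int j / 2" and s = s])
    show "1 \<le> s" using w1 u1 by (simp add: s_def)
    have "int (count_fill n g (real_of_int j / 2)) = R (real_of_int j / 2) + int u * c j"
      using hg lift_at by simp
    moreover have "int u * (2 * w) \<le> int u * c j" using cw u1 by (intro mult_left_mono) auto
    ultimately have "int (2 * s) \<le> int (count_fill n g (real_of_int j / 2))"
      using Rpos[rule_format, of "real_of_int j / 2"] si by (simp add: algebra_simps)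
    thus "2 * s \<le> count_fill n g (real_of_int j / 2)" by linarith
  next
    fix g' assume hg': "\<And>y. int (count_fill n g' y) = int (count_fill n g y) + int s * ((if y = real_of_int j / 2 + 1/2 then 1 else 0) + (if y = real_of_int j / 2 - 1/2 then 1 else 0) - 2*(if y = real_of_int j / 2 then 1 else 0))"
    have e1: "real_of_int (j+1) / 2 = real_of_int j / 2 + 1/2" by simp
    have e2: "real_of_int (j-1) / 2 = real_of_int j / 2 - 1/2" by simp
    have "\<forall>y. int (count_fill n g' y) = R y + int u * lift (\<lambda>l. c l + w * (dl (j+1) l + dl (j-1) l - 2 * dl j l)) y"
    proof
      fix y
      show "int (count_fill n g' y) = R y + int u * lift (\<lambda>l. c l + w * (dl (j+1) l + dl (j-1) l - 2 * dl j l)) y"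
        unfolding lift_lin lift_dl hg' si e1 e2 using hg by (simp add: algebra_simps)
    qed
    thus "filler_wins n G t g'" using W unfolding WW_def by blast
  qed
qed

lemma WW_cong: "WW n G R u t c \<Longrightarrow> (\<And>l. c l = c' l) \<Longrightarrow> WW n G R u t c'"
proof -
  assume "WW n G R u t c" "\<And>l. c l = c' l"
  moreover have "c = c'" using \<open>\<And>l. c l = c' l\<close> by auto
  ultimately show ?thesis by simp
qed

lemma emit:
  assumes bT: "b \<le> T" and cT: "2 \<le> c T" and cl: "\<forall>l. b \<le> l \<and> l < T \<longrightarrow> 1 \<le> c l"
  and Rpos: "\<forall>y. 0 \<le> R y" and u1: "1 \<le> u"
  and W: "WW n G R u t (\<lambda>l. c l + dl (T+1) l - dl T l - dl b l + dl (b-1) l)"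
  shows "WW n G R u (t + nat (T - b + 1)) c"
proof -
  define S where "S j = (\<lambda>l. c l + dl (T+1) l - dl T l - dl (j+1) l + dl j l)" for j
  have cas: "b - 1 + int d \<le> T \<Longrightarrow> WW n G R u (t + d) (S (b - 1 + int d))" for d
  proof (induction d)
    case 0
    show ?case using W by (simp add: S_def)
  next
    case (Suc d)
    define j where "j = b + int d"
    have jT: "j \<le> T" using Suc.prems by (simp add: j_def)
    have e: "b - 1 + int d = j - 1" by (simp add: j_def)
    have IH: "WW n G R u (t + d) (S (j - 1))" using Suc.IH Suc.prems unfolding e by (simp add: j_def)
    have "WW n G R u (Suc (t + d)) (S j)"
    proof (rule fire_abs[where w = 1 and j = j])
      show "2 * 1 \<le> S j j"
      proof (cases "j = T")
        case True thus ?thesis using cT by (simp add: S_def dl_def)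
      next
        case False
        hence "1 \<le> c j" using cl jT by (simp add: j_def)
        thus ?thesis using False jT by (simp add: S_def dl_def)
      qed
      show "WW n G R u (t + d) (\<lambda>l. S j l + 1 * (dl (j + 1) l + dl (j - 1) l - 2 * dl j l))"
        by (rule WW_cong[OF IH]) (simp add: S_def algebra_simps)
    qed (use Rpos u1 in auto)
    thus ?case by (simp add: j_def)
  qed
  have "WW n G R u (t + nat (T - b + 1)) (S (b - 1 + int (nat (T - b + 1))))"
    by (rule cas) (use bT in simp)
  moreover have "b - 1 + int (nat (T - b + 1)) = T" using bT by simp
  ultimately show ?thesis by (auto elim!: WW_cong simp: S_def dl_def)
qed

definition Cfg :: "int \<Rightarrow> int \<Rightarrow> int \<Rightarrow> int" where
  "Cfg K i l = (if l = i \<or> l = -i then 2*K - i else if -i < l \<and> l < i then 1 else 0)"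

lemma phase:
  assumes i1: "1 \<le> i" and iK: "i < K" and Rpos: "\<forall>y. 0 \<le> R y" and u1: "1 \<le> u"
  and W: "WW n G R u t (Cfg K (i+1))"
  shows "WW n G R u (t + nat (4*K*K)) (Cfg K i)"
proof -
  define V where "V l = dl (i+1) l - dl i l - dl (-i) l + dl (-i-1) l" for l
  define Y where "Y j = (\<lambda>l. Cfg K (i+1) l - int j * V l)" for j :: nat
  have cas: "int j \<le> 2*K - i - 1 \<Longrightarrow> WW n G R u (t + j * nat (2*i+1)) (Y j)" for j
  proof (induction j)
    case 0 show ?case using W by (simp add: Y_def)
  next
    case (Suc j)
    have IH: "WW n G R u (t + j * nat (2*i+1)) (Y j)" using Suc by simp
    have "WW n G R u (t + j * nat (2*i+1) + nat (i - (-i) + 1)) (Y (Suc j))"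
    proof (rule emit)
      show "-i \<le> i" using i1 by simp
      show "2 \<le> Y (Suc j) i" using i1 by (simp add: Y_def V_def Cfg_def dl_def)
      show "\<forall>l. - i \<le> l \<and> l < i \<longrightarrow> 1 \<le> Y (Suc j) l"
        using i1 by (auto simp: Y_def V_def Cfg_def dl_def)
      show "WW n G R u (t + j * nat (2 * i + 1)) (\<lambda>l. Y (Suc j) l + dl (i + 1) l - dl i l - dl (- i) l + dl (- i - 1) l)"
        by (rule WW_cong[OF IH]) (simp add: Y_def V_def algebra_simps)
    qed (use Rpos u1 in auto)
    moreover have "t + j * nat (2*i+1) + nat (i - (-i) + 1) = t + Suc j * nat (2*i+1)" by simp
    ultimately show ?case by (simp add: add.commute add.left_commute)
  qed
  define E where "E = nat (2*K - i - 1)"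
  have "WW n G R u (t + E * nat (2*i+1)) (Y E)" by (rule cas) (use iK i1 in \<open>simp add: E_def\<close>)
  moreover have "Y E l = Cfg K i l" for l
    using i1 iK by (auto simp: Y_def V_def Cfg_def dl_def E_def)
  moreover have "E * nat (2*i+1) \<le> nat (4*K*K)"
  proof -
    have "E \<le> nat (2*K)" "nat (2*i+1) \<le> nat (2*K)" using i1 iK by (auto simp: E_def)
    hence "E * nat (2*i+1) \<le> nat (2*K) * nat (2*K)" by (intro mult_le_mono)
    also have "\<dots> = nat (4*K*K)" using iK i1 by (simp add: nat_mult_distrib[symmetric])
    finally show ?thesis .
  qed
  ultimately show ?thesis by (meson WW_cong WW_mono add_le_mono order_refl)
qed

lemma chain:
  assumes K1: "1 \<le> K" and Rpos: "\<forall>y. 0 \<le> R y" and u1: "1 \<le> u"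
  and W: "WW n G R u 0 (Cfg K K)"
  shows "WW n G R u (nat (K-1) * nat (4*K*K)) (Cfg K 1)"
proof -
  have "int d \<le> K - 1 \<Longrightarrow> WW n G R u (d * nat (4*K*K)) (Cfg K (K - int d))" for d
  proof (induction d)
    case 0 show ?case using W by simp
  next
    case (Suc d)
    have "WW n G R u (d * nat (4*K*K) + nat (4*K*K)) (Cfg K (K - int d - 1))"
      by (rule phase) (use Suc Rpos u1 in auto)
    thus ?case by (simp add: add.commute algebra_simps)
  qed
  from this[of "nat (K-1)"] show ?thesis using K1 by simp
qed

theorem lemma5p4:
  "\<exists>C::real. \<forall>(n::nat) (k::nat) (m::nat) (f::nat \<Rightarrow> real).
     0 < k \<longrightarrow> 0 < m \<longrightarrow> (4 * k) dvd m \<longrightarrow> m \<le> n \<longrightarrow> m \<le> count_fill n f 0 \<longrightarrow>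
     filler_wins n (\<lambda>g. real m / 4 \<le> real (count_fill n g (real k / 2)))
       (nat \<lfloor>C * real k ^ 3\<rfloor>) f"
proof (intro exI allI impI)
  fix n k m :: nat and f :: "nat \<Rightarrow> real"
  assume k0: "0 < k" and m0: "0 < m" and dv: "(4 * k) dvd m" and mn: "m \<le> n"
    and cf: "m \<le> count_fill n f 0"
  define G where "G = (\<lambda>g. real m / 4 \<le> real (count_fill n g (real k / 2)))"
  obtain u where mu: "m = 4 * k * u" using dv by blast
  have u1: "1 \<le> u" using m0 mu by (cases u) auto
  define K where "K = int k"
  have K1: "1 \<le> K" using k0 by (simp add: K_def)
  define c0 where "c0 = (\<lambda>l. (4*K - 1) * dl 0 l)"
  define R where "R y = int (count_fill n f y) - int u * lift c0 y" for y
  have lc0: "lift c0 y = (4*K - 1) * (if y = 0 then 1 else 0)" for y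
  proof -
    have "lift c0 y = (4*K - 1) * lift (dl 0) y" by (simp add: lift_def c0_def)
    thus ?thesis by (simp add: lift_dl)
  qed
  have Rpos: "\<forall>y. 0 \<le> R y"
  proof
    fix y
    show "0 \<le> R y"
    proof (cases "y = 0")
      case True
      have "int u * (4*K - 1) \<le> int u * (4 * K)" using u1 by simp
      also have "\<dots> = int m" using mu by (simp add: K_def)
      also have "\<dots> \<le> int (count_fill n f 0)" using cf by simp
      finally show ?thesis using True by (simp add: R_def lc0)
    qed (simp add: R_def lc0)
  qed
  have Wfin: "WW n G R u 0 (Cfg K K)"
    unfolding WW_def
  proof (intro allI impI)
    fix g assume hg: "\<forall>y. int (count_fill n g y) = R y + int u * lift (Cfg K K) y"
    have "int (count_fill n g (real_of_int K / 2)) = R (real_of_int K / 2) + int u * K"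
      using hg lift_at[of "Cfg K K" K] K1 by (simp add: Cfg_def)
    hence "int u * K \<le> int (count_fill n g (real_of_int K / 2))"
      using Rpos by (metis le_add_same_cancel2)
    hence "int (u * k) \<le> int (count_fill n g (real k / 2))" by (simp add: K_def)
    hence "u * k \<le> count_fill n g (real k / 2)" by linarith
    hence "real (u * k) \<le> real (count_fill n g (real k / 2))" by linarith
    hence "G g" unfolding G_def mu by (simp add: mult.commute)
    thus "filler_wins n G 0 g" by simp
  qed
  have W1: "WW n G R u (nat (K-1) * nat (4*K*K)) (Cfg K 1)"
    by (rule chain[OF K1 Rpos u1 Wfin])
  have W0: "WW n G R u (Suc (nat (K-1) * nat (4*K*K))) c0"
  proof (rule fire_abs[where w = "2*K - 1" and j = 0])
    show "WW n G R u (nat (K - 1) * nat (4 * K * K)) (\<lambda>l. c0 l + (2 * K - 1) * (dl (0 + 1) l + dl (0 - 1) l - 2 * dl 0 l))"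
      by (rule WW_cong[OF W1]) (auto simp: Cfg_def c0_def dl_def algebra_simps)
  qed (use K1 Rpos u1 in \<open>auto simp: c0_def dl_def\<close>)
  have f0: "filler_wins n G (Suc (nat (K-1) * nat (4*K*K))) f"
    using W0 unfolding WW_def R_def by auto
  have bound: "Suc (nat (K-1) * nat (4*K*K)) \<le> nat \<lfloor>5 * real k ^ 3\<rfloor>"
  proof -
    have e: "5 * real k ^ 3 = real (5 * k^3)" by simp
    have "nat (K-1) * nat (4*K*K) = (k - 1) * (4*k*k)"
      using k0 by (simp add: K_def nat_mult_distrib of_nat_diff nat_diff_distrib)
    moreover have "Suc ((k - 1) * (4*k*k)) \<le> 5 * k^3"
    proof -
      obtain j where "k = Suc j" using k0 by (cases k) auto
      thus ?thesis by (simp add: power3_eq_cube algebra_simps)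
    qed
    moreover have "nat \<lfloor>5 * real k ^ 3\<rfloor> = 5 * k^3" by (simp only: e floor_of_nat nat_int)
    ultimately show ?thesis by simp
  qed
  show "filler_wins n (\<lambda>g. real m / 4 \<le> real (count_fill n g (real k / 2))) (nat \<lfloor>5 * real k ^ 3\<rfloor>) f"
    using fw_mono[OF f0 bound] unfolding G_def .
qed

end
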